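(* Let $G$ be an f-closed and splittable query graph, and let $u,v\in V(G)$. Suppose $P_A$ and $P_B$ are two distinct directed simple paths from $u$ to $v$ such that no vertex of $P_A$ other than $u,v$ lies in the same strongly connected component as a vertex of $P_B$ other than $u,v$. Then $v\in u^{\oplus}$.
   Context: $G=G[Q]$ is the query graph of a Boolean CQ without self-joins with atoms $R(u,v)$, $u\ne v$, first attribute the key: vertices are variables, each atom gives an edge $e_R=(u_R,v_R)$ (parallel edges from different atoms allowed), consistent/inconsistent according to the type of $R$; $E^i$ = inconsistent edges. Paths may have zero edges. $x\to y$: a directed path with only consistent edges; $x\leadsto y$: any directed path; undirected paths ignore directions; for a path $P$ and vertex set $N$, $P\cap N$ is the set of vertices of $P$ in $N$. $u^{\oplus}=\{v:u\to v\}$, $u^+=\{v:u\leadsto v\}$, $u^{+,R}=\{v: u\leadsto v$ in $G-\{e_R\}\}$. For $R,S\in E^i$: $R\sim S$ iff $u_S\in u_R^+$ and $u_R\in u_S^+$; $[R]$ the class of $R$; $coupled^+(R)=[R]\cup\{S\in E^i:\exists$ undirected path $P$ from $v_R$ to $u_S$ with $P\cap u_R^{+,R}=\emptyset\}$; $G$ is splittable if there are no $R,S\in E^i$ with $R\in coupled^+(S)$, $S\in coupled^+(R)$ and $R\not\sim S$. $G$ is f-closed if for every $R\in E^i$, $v_R^{\oplus}\cap u_R^{+,R}\subseteq u_R^{\oplus}$. *)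

theory Defs
  imports Main
begin

text \<open>A query graph is given by a finite set E of edges (one per atom), maps src/tgt
giving the key variable u_R and the non-key variable v_R of each atom, and the set Ei of
inconsistent edges. Parallel edges are allowed since edges are abstract identities.\<close>

definition query_graph :: "'e set \<Rightarrow> 'e set \<Rightarrow> ('e \<Rightarrow> 'v) \<Rightarrow> ('e \<Rightarrow> 'v) \<Rightarrow> bool" where
  "query_graph E Ei src tgt \<longleftrightarrow> finite E \<and> Ei \<subseteq> E \<and> (\<forall>e\<in>E. src e \<noteq> tgt e)"

definition qvertices :: "'e set \<Rightarrow> ('e \<Rightarrow> 'v) \<Rightarrow> ('e \<Rightarrow> 'v) \<Rightarrow> 'v set" where
  "qvertices E src tgt = src ` E \<union> tgt ` E"

fun dwalk :: "'e set \<Rightarrow> ('e \<Rightarrow> 'v) \<Rightarrow> ('e \<Rightarrow> 'v) \<Rightarrow> 'v \<Rightarrow> 'e list \<Rightarrow> 'v \<Rightarrow> bool" where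
  "dwalk F src tgt x [] y = (x = y)"
| "dwalk F src tgt x (e # es) y = (e \<in> F \<and> src e = x \<and> dwalk F src tgt (tgt e) es y)"

fun uwalk :: "'e set \<Rightarrow> ('e \<Rightarrow> 'v) \<Rightarrow> ('e \<Rightarrow> 'v) \<Rightarrow> 'v \<Rightarrow> 'e list \<Rightarrow> 'v \<Rightarrow> bool" where
  "uwalk F src tgt x [] y = (x = y)"
| "uwalk F src tgt x (e # es) y = (e \<in> F \<and>
     ((src e = x \<and> uwalk F src tgt (tgt e) es y) \<or> (tgt e = x \<and> uwalk F src tgt (src e) es y)))"

definition dverts :: "('e \<Rightarrow> 'v) \<Rightarrow> 'v \<Rightarrow> 'e list \<Rightarrow> 'v list" where
  "dverts tgt x es = x # map tgt es"

fun uverts :: "('e \<Rightarrow> 'v) \<Rightarrow> ('e \<Rightarrow> 'v) \<Rightarrow> 'v \<Rightarrow> 'e list \<Rightarrow> 'v list" where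
  "uverts src tgt x [] = [x]"
| "uverts src tgt x (e # es) =
     x # uverts src tgt (if src e = x then tgt e else src e) es"

definition simple_dpath :: "'e set \<Rightarrow> ('e \<Rightarrow> 'v) \<Rightarrow> ('e \<Rightarrow> 'v) \<Rightarrow> 'v \<Rightarrow> 'e list \<Rightarrow> 'v \<Rightarrow> bool" where
  "simple_dpath F src tgt x es y \<longleftrightarrow> dwalk F src tgt x es y \<and> distinct (dverts tgt x es)"

definition reach :: "'e set \<Rightarrow> ('e \<Rightarrow> 'v) \<Rightarrow> ('e \<Rightarrow> 'v) \<Rightarrow> 'v \<Rightarrow> 'v \<Rightarrow> bool" where
  "reach F src tgt x y \<longleftrightarrow> (\<exists>es. dwalk F src tgt x es y)"

definition creach :: "'e set \<Rightarrow> 'e set \<Rightarrow> ('e \<Rightarrow> 'v) \<Rightarrow> ('e \<Rightarrow> 'v) \<Rightarrow> 'v \<Rightarrow> 'v \<Rightarrow> bool" where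
  "creach E Ei src tgt x y \<longleftrightarrow> reach (E - Ei) src tgt x y"

definition oplus_set :: "'e set \<Rightarrow> 'e set \<Rightarrow> ('e \<Rightarrow> 'v) \<Rightarrow> ('e \<Rightarrow> 'v) \<Rightarrow> 'v \<Rightarrow> 'v set" where
  "oplus_set E Ei src tgt x = {y. creach E Ei src tgt x y}"

definition plus_set :: "'e set \<Rightarrow> ('e \<Rightarrow> 'v) \<Rightarrow> ('e \<Rightarrow> 'v) \<Rightarrow> 'v \<Rightarrow> 'v set" where
  "plus_set E src tgt x = {y. reach E src tgt x y}"

definition plus_set_wo :: "'e set \<Rightarrow> ('e \<Rightarrow> 'v) \<Rightarrow> ('e \<Rightarrow> 'v) \<Rightarrow> 'e \<Rightarrow> 'v \<Rightarrow> 'v set" where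
  "plus_set_wo E src tgt R x = {y. reach (E - {R}) src tgt x y}"

definition equiv_inc :: "'e set \<Rightarrow> ('e \<Rightarrow> 'v) \<Rightarrow> ('e \<Rightarrow> 'v) \<Rightarrow> 'e \<Rightarrow> 'e \<Rightarrow> bool" where
  "equiv_inc E src tgt R S \<longleftrightarrow> src S \<in> plus_set E src tgt (src R) \<and> src R \<in> plus_set E src tgt (src S)"

definition eq_class :: "'e set \<Rightarrow> 'e set \<Rightarrow> ('e \<Rightarrow> 'v) \<Rightarrow> ('e \<Rightarrow> 'v) \<Rightarrow> 'e \<Rightarrow> 'e set" where
  "eq_class E Ei src tgt R = {S \<in> Ei. equiv_inc E src tgt R S}"

definition coupled_plus :: "'e set \<Rightarrow> 'e set \<Rightarrow> ('e \<Rightarrow> 'v) \<Rightarrow> ('e \<Rightarrow> 'v) \<Rightarrow> 'e \<Rightarrow> 'e set" where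
  "coupled_plus E Ei src tgt R = eq_class E Ei src tgt R \<union>
     {S \<in> Ei. \<exists>es. uwalk E src tgt (tgt R) es (src S) \<and>
                 set (uverts src tgt (tgt R) es) \<inter> plus_set_wo E src tgt R (src R) = {}}"

definition splittable :: "'e set \<Rightarrow> 'e set \<Rightarrow> ('e \<Rightarrow> 'v) \<Rightarrow> ('e \<Rightarrow> 'v) \<Rightarrow> bool" where
  "splittable E Ei src tgt \<longleftrightarrow> \<not> (\<exists>R\<in>Ei. \<exists>S\<in>Ei. R \<in> coupled_plus E Ei src tgt S \<and>
      S \<in> coupled_plus E Ei src tgt R \<and> \<not> equiv_inc E src tgt R S)"

definition f_closed :: "'e set \<Rightarrow> 'e set \<Rightarrow> ('e \<Rightarrow> 'v) \<Rightarrow> ('e \<Rightarrow> 'v) \<Rightarrow> bool" where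
  "f_closed E Ei src tgt \<longleftrightarrow> (\<forall>R\<in>Ei. oplus_set E Ei src tgt (tgt R) \<inter> plus_set_wo E src tgt R (src R)
      \<subseteq> oplus_set E Ei src tgt (src R))"

definition same_scc :: "'e set \<Rightarrow> ('e \<Rightarrow> 'v) \<Rightarrow> ('e \<Rightarrow> 'v) \<Rightarrow> 'v \<Rightarrow> 'v \<Rightarrow> bool" where
  "same_scc E src tgt a b \<longleftrightarrow> reach E src tgt a b \<and> reach E src tgt b a"

end

theory Submission
  imports Defs
begin

lemma dwalk_append: "dwalk F s t x (p @ q) y = (\<exists>z. dwalk F s t x p z \<and> dwalk F s t z q y)"
  by (induction p arbitrary: x) auto

lemma dwalk_mono: "dwalk F s t x es y \<Longrightarrow> set es \<subseteq> F' \<Longrightarrow> dwalk F' s t x es y"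
  by (induction es arbitrary: x) auto

lemma dwalk_in: "dwalk F s t x es y \<Longrightarrow> set es \<subseteq> F"
  by (induction es arbitrary: x) auto

lemma dwalk_reach_all: "dwalk F s t x es y \<Longrightarrow> w \<in> set (dverts t x es) \<Longrightarrow> reach F s t w y"
proof (induction es arbitrary: x)
  case Nil then show ?case by (auto simp: dverts_def reach_def intro: exI[of _ "[]"])
next
  case (Cons e es)
  show ?case
  proof (cases "w = x")
    case True then show ?thesis using Cons.prems unfolding reach_def by blast
  next
    case False
    then have "w \<in> set (dverts t (t e) es)" using Cons.prems by (auto simp: dverts_def)
    then show ?thesis using Cons by auto
  qed
qed

lemma dwalk_edge_verts: "dwalk F s t x es y \<Longrightarrow> e \<in> set es \<Longrightarrow>
   s e \<in> set (dverts t x es) \<and> t e \<in> set (dverts t x es)"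
  by (induction es arbitrary: x) (auto simp: dverts_def)

lemma uwalk_append: "uwalk F s t x (p @ q) y = (\<exists>z. uwalk F s t x p z \<and> uwalk F s t z q y)"
  by (induction p arbitrary: x) auto

lemma dwalk_uwalk: "dwalk F s t x es y \<Longrightarrow> uwalk F s t x es y"
  by (induction es arbitrary: x) auto

lemma dwalk_uwalk_rev: "dwalk F s t x es y \<Longrightarrow> uwalk F s t y (rev es) x"
proof (induction es arbitrary: x)
  case Nil then show ?case by simp
next
  case (Cons e es)
  then have "uwalk F s t y (rev es) (t e)" by simp
  moreover have "uwalk F s t (t e) [e] x" using Cons.prems by simp
  ultimately show ?case by (auto simp: uwalk_append)
qed

lemma uverts_sub: "x \<in> T \<Longrightarrow> \<forall>e\<in>set es. s e \<in> T \<and> t e \<in> T \<Longrightarrow> set (uverts s t x es) \<subseteq> T"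
  by (induction es arbitrary: x) auto

lemma split_edge: "dwalk F s t x es y \<Longrightarrow> \<not> P x \<Longrightarrow> P y \<Longrightarrow>
  \<exists>p1 e p2. es = p1 @ e # p2 \<and> dwalk F s t x p1 (s e) \<and> e \<in> F \<and> \<not> P (s e) \<and> P (t e)
     \<and> dwalk F s t (t e) p2 y"
proof (induction es arbitrary: x)
  case Nil then show ?case by simp
next
  case (Cons e es)
  show ?case
  proof (cases "P (t e)")
    case True then show ?thesis using Cons.prems by (intro exI[of _ "[]"]) auto
  next
    case False
    then obtain p1 e' p2 where "es = p1 @ e' # p2 \<and> dwalk F s t (t e) p1 (s e') \<and> e' \<in> F \<and> \<not> P (s e') \<and> P (t e')
     \<and> dwalk F s t (t e') p2 y" using Cons.IH[of "t e"] Cons.prems False by auto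
    then show ?thesis using Cons.prems by (intro exI[of _ "e # p1"]) auto
  qed
qed

lemma dwalk_end: "dwalk F s t x p z \<Longrightarrow> p \<noteq> [] \<Longrightarrow> z \<in> t ` set p"
proof (induction p arbitrary: x)
  case Nil then show ?case by simp
next
  case (Cons e es)
  then show ?case by (cases "es = []") auto
qed

lemma single_edge: assumes "simple_dpath F s t x es y" "e \<in> set es" "s e = x" "t e = y"
  shows "es = [e]"
proof -
  obtain p1 p2 where es: "es = p1 @ e # p2" using assms(2) by (meson split_list)
  have d: "distinct (x # map t p1 @ t e # map t p2)"
    using assms(1) es by (simp add: simple_dpath_def dverts_def)
  have w: "dwalk F s t x p1 (s e)" "dwalk F s t (t e) p2 y"
    using assms(1) es by (auto simp: simple_dpath_def dwalk_append)
  have "p1 = []"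
  proof (rule ccontr)
    assume "p1 \<noteq> []"
    then have "x \<in> t ` set p1" using dwalk_end[OF w(1)] assms(3) by simp
    then show False using d by auto
  qed
  moreover have "p2 = []"
  proof (rule ccontr)
    assume "p2 \<noteq> []"
    then have "y \<in> t ` set p2" using dwalk_end[OF w(2)] by simp
    then show False using d assms(4) by auto
  qed
  ultimately show ?thesis using es by simp
qed

lemma reach_trans: "reach F s t x y \<Longrightarrow> reach F s t y z \<Longrightarrow> reach F s t x z"
  unfolding reach_def by (metis dwalk_append)

lemma same_scc_refl: "same_scc E s t a a"
  unfolding same_scc_def reach_def by (auto intro: exI[of _ "[]"])

lemma key:
  assumes qg: "query_graph E Ei src tgt"
    and fc: "f_closed E Ei src tgt"
    and pa: "simple_dpath E src tgt u PA v"
    and pb: "simple_dpath E src tgt u PB v"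
    and ne: "PA \<noteq> PB"
    and scc: "\<forall>a \<in> set (dverts tgt u PA) - {u, v}. \<forall>b \<in> set (dverts tgt u PB) - {u, v}.
           \<not> same_scc E src tgt a b"
    and PAd: "PA = p1 @ R # p2"
    and R: "R \<in> E" "\<not> creach E Ei src tgt (src R) v" "creach E Ei src tgt (tgt R) v"
    and p2: "dwalk E src tgt (tgt R) p2 v"
  shows "R \<in> Ei \<and> src R \<in> set (dverts tgt u PA) - {u, v} \<and>
     (\<forall>S q1 q2. PB = q1 @ S # q2 \<longrightarrow> dwalk E src tgt (tgt S) q2 v \<longrightarrow> S \<in> Ei \<longrightarrow>
         S \<in> coupled_plus E Ei src tgt R)"
proof -
  define a where "a = src R"
  define b where "b = tgt R"
  have dA: "dwalk E src tgt u PA v" and dB: "dwalk E src tgt u PB v"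
    using pa pb by (auto simp: simple_dpath_def)
  have RinA: "R \<in> set PA" using PAd by simp
  have RE: "R \<in> Ei"
  proof (rule ccontr)
    assume "R \<notin> Ei"
    then have "dwalk (E - Ei) src tgt (src R) [R] (tgt R)" using R by simp
    then have "creach E Ei src tgt (src R) (tgt R)" unfolding creach_def reach_def by blast
    then show False using R reach_trans[of "E - Ei" src tgt "src R" "tgt R" v] unfolding creach_def by blast
  qed
  have noreach: False if "reach (E - {R}) src tgt a v"
  proof -
    have "v \<in> plus_set_wo E src tgt R (src R)" using that by (simp add: plus_set_wo_def a_def)
    moreover have "v \<in> oplus_set E Ei src tgt (tgt R)" using R by (simp add: oplus_set_def)
    ultimately have "v \<in> oplus_set E Ei src tgt (src R)" using fc RE unfolding f_closed_def by blast
    then show False using R by (simp add: oplus_set_def)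
  qed
  have vv: "creach E Ei src tgt v v" unfolding creach_def reach_def by (auto intro: exI[of _ "[]"])
  have av: "a \<noteq> v" using R vv a_def by auto
  have aA: "a \<in> set (dverts tgt u PA)" using dwalk_edge_verts[OF dA RinA] a_def by simp
  have EB: "set PB \<subseteq> E" using dwalk_in[OF dB] .
  have EA: "set PA \<subseteq> E" using dwalk_in[OF dA] .
  have au: "a \<noteq> u"
  proof
    assume au: "a = u"
    show False
    proof (cases "R \<in> set PB")
      case False
      then have "set PB \<subseteq> E - {R}" using EB by blast
      then have "dwalk (E - {R}) src tgt u PB v" by (rule dwalk_mono[OF dB])
      then show False using noreach au unfolding reach_def by blast
    next
      case True
      have bA: "b \<in> set (dverts tgt u PA)" using dwalk_edge_verts[OF dA RinA] b_def by simp
      have bB: "b \<in> set (dverts tgt u PB)" using dwalk_edge_verts[OF dB True] b_def by simp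
      have bu: "b \<noteq> u" using qg R(1) au unfolding query_graph_def a_def b_def by auto
      show False
      proof (cases "b = v")
        case True
        have "PA = [R]" using single_edge[OF pa RinA] au True a_def b_def by blast
        moreover have "PB = [R]" using single_edge[OF pb \<open>R \<in> set PB\<close>] au True a_def b_def by blast
        ultimately have "PA = PB" by simp
        then show False using ne by simp
      next
        case False
        have "b \<in> set (dverts tgt u PA) - {u, v}" "b \<in> set (dverts tgt u PB) - {u, v}"
          using bA bB bu False by auto
        then show False using scc same_scc_refl[of E src tgt b] by blast
      qed
    qed
  qed
  have RnB: "R \<notin> set PB"
  proof
    assume "R \<in> set PB"
    then have "a \<in> set (dverts tgt u PB)" using dwalk_edge_verts[OF dB] a_def by simp
    then have "a \<in> set (dverts tgt u PB) - {u, v}" "a \<in> set (dverts tgt u PA) - {u, v}"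
      using aA au av by auto
    then show False using scc same_scc_refl[of E src tgt a] by blast
  qed
  have "distinct (map tgt PA)" using pa by (simp add: simple_dpath_def dverts_def)
  then have "distinct PA" using distinct_map by blast
  then have Rp2: "R \<notin> set p2" using PAd by simp
  have p2s: "set p2 \<subseteq> E" using EA PAd by auto
  have "set p2 \<subseteq> E - {R}" using p2s Rp2 by blast
  then have p2R: "dwalk (E - {R}) src tgt b p2 v" unfolding b_def by (rule dwalk_mono[OF p2])
  have "set PB \<subseteq> E - {R}" using EB RnB by blast
  then have dBR: "dwalk (E - {R}) src tgt u PB v" by (rule dwalk_mono[OF dB])
  define T where "T = {w. reach (E - {R}) src tgt w v}"
  have T1: "set (dverts tgt b p2) \<subseteq> T" using dwalk_reach_all[OF p2R] T_def by blast
  have T2: "set (dverts tgt u PB) \<subseteq> T" using dwalk_reach_all[OF dBR] T_def by blast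
  have coup: "S \<in> coupled_plus E Ei src tgt R"
    if S: "PB = q1 @ S # q2" "dwalk E src tgt (tgt S) q2 v" "S \<in> Ei" for S q1 q2
  proof -
    have SE: "S \<in> E" using EB S(1) by auto
    have dS: "dwalk E src tgt (src S) (S # q2) v" using S(2) SE by simp
    define es where "es = p2 @ rev (S # q2)"
    have uw: "uwalk E src tgt b es (src S)"
      unfolding es_def uwalk_append using dwalk_uwalk[OF p2] dwalk_uwalk_rev[OF dS] b_def by blast
    have edges: "\<forall>e\<in>set es. src e \<in> T \<and> tgt e \<in> T"
    proof
      fix e assume "e \<in> set es"
      then have "e \<in> set p2 \<or> e \<in> set PB" using S(1) by (auto simp: es_def)
      then show "src e \<in> T \<and> tgt e \<in> T"
        using dwalk_edge_verts[OF p2] dwalk_edge_verts[OF dB] T1 T2 b_def by blast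
    qed
    have bT: "b \<in> T" using T1 by (simp add: dverts_def)
    have sub: "set (uverts src tgt b es) \<subseteq> T" using uverts_sub[OF bT edges] .
    have disj: "set (uverts src tgt b es) \<inter> plus_set_wo E src tgt R (src R) = {}"
    proof (rule ccontr)
      assume "set (uverts src tgt b es) \<inter> plus_set_wo E src tgt R (src R) \<noteq> {}"
      then obtain w where "w \<in> T" "reach (E - {R}) src tgt a w"
        using sub by (auto simp: plus_set_wo_def a_def)
      then have "reach (E - {R}) src tgt a v" using reach_trans T_def by fastforce
      then show False using noreach by simp
    qed
    show ?thesis unfolding coupled_plus_def using S(3) uw disj b_def by blast
  qed
  show ?thesis using RE aA au av coup a_def by blast
qed

theorem lemma5p12:
  fixes E Ei :: "'e set" and src tgt :: "'e \<Rightarrow> 'v" and u v :: 'v and PA PB :: "'e list"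
  assumes "query_graph E Ei src tgt"
    and "f_closed E Ei src tgt"
    and "splittable E Ei src tgt"
    and "u \<in> qvertices E src tgt" and "v \<in> qvertices E src tgt"
    and "simple_dpath E src tgt u PA v"
    and "simple_dpath E src tgt u PB v"
    and "PA \<noteq> PB"
    and "\<forall>a \<in> set (dverts tgt u PA) - {u, v}. \<forall>b \<in> set (dverts tgt u PB) - {u, v}.
           \<not> same_scc E src tgt a b"
  shows "v \<in> oplus_set E Ei src tgt u"
proof (rule ccontr)
  assume nv: "v \<notin> oplus_set E Ei src tgt u"
  let ?P = "\<lambda>w. creach E Ei src tgt w v"
  have nu: "\<not> ?P u" using nv by (simp add: oplus_set_def)
  have vv: "?P v" unfolding creach_def reach_def by (auto intro: exI[of _ "[]"])
  have dA: "dwalk E src tgt u PA v" and dB: "dwalk E src tgt u PB v"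
    using assms(6,7) by (auto simp: simple_dpath_def)
  obtain p1 R p2 where A: "PA = p1 @ R # p2" "R \<in> E" "\<not> ?P (src R)" "?P (tgt R)"
      "dwalk E src tgt (tgt R) p2 v"
    using split_edge[OF dA, of ?P] nu vv by blast
  obtain q1 S q2 where B: "PB = q1 @ S # q2" "S \<in> E" "\<not> ?P (src S)" "?P (tgt S)"
      "dwalk E src tgt (tgt S) q2 v"
    using split_edge[OF dB, of ?P] nu vv by blast
  have scc2: "\<forall>a \<in> set (dverts tgt u PB) - {u, v}. \<forall>b \<in> set (dverts tgt u PA) - {u, v}.
           \<not> same_scc E src tgt a b" using assms(9) unfolding same_scc_def by blast
  from key[OF assms(1,2,6,7,8,9) A] have K1: "R \<in> Ei" "src R \<in> set (dverts tgt u PA) - {u, v}"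
    "S \<in> Ei \<Longrightarrow> S \<in> coupled_plus E Ei src tgt R" using B by blast+
  have ne2: "PB \<noteq> PA" using assms(8) by simp
  from key[OF assms(1,2,7,6) ne2 scc2 B] have K2: "S \<in> Ei" "src S \<in> set (dverts tgt u PB) - {u, v}"
    "R \<in> Ei \<Longrightarrow> R \<in> coupled_plus E Ei src tgt S" using A by blast+
  have "\<not> equiv_inc E src tgt R S"
    using assms(9) K1(2) K2(2) unfolding equiv_inc_def same_scc_def plus_set_def by blast
  then show False using assms(3) K1 K2 unfolding splittable_def by blast
qed

end
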